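(* For any set system $\Omega$ there is an integer $K_\Omega$ such that for all $k\ge K_\Omega$, the set system $k\Omega$ belongs to $\mathfrak{BC}$. That is, every complex zero $q$ of $H_{k\Omega}(q)$ satisfies $|q|\le1$.
   Context: A set system $\Omega$ on a finite set $E$ is a nonempty collection of subsets of $E$ (its faces). Let $d=d_\Omega$ be the maximum size of a face, let $f_i$ be the number of faces of size $i$, and let $F_\Omega(z)=\sum_{i=0}^df_iz^i$. The $H$-polynomial is $H_\Omega(q)=(1-q)^dF_\Omega\big(\frac{q}{1-q}\big)$. $\mathfrak{BC}$ is the class of set systems whose $H$-polynomial is Schur quasi-stable, i.e. has all complex zeros in $|q|\le1$. For a positive integer $k$, $k\Omega$ is the set system on $E\times\{1,\ldots,k\}$ defined as follows: $\{(e_1,i_1),\ldots,(e_r,i_r)\}$ is a face of $k\Omega$ if and only if $e_1,\ldots,e_r$ are pairwise distinct and $\{e_1,\ldots,e_r\}\in\Omega$. *)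

theory Defs
  imports Complex_Main "HOL-Computational_Algebra.Polynomial"
begin

definition set_system :: "'a set \<Rightarrow> 'a set set \<Rightarrow> bool" where
  "set_system E \<Omega> \<longleftrightarrow> finite E \<and> \<Omega> \<noteq> {} \<and> (\<forall>F\<in>\<Omega>. F \<subseteq> E)"

definition ss_dim :: "'a set set \<Rightarrow> nat" where
  "ss_dim \<Omega> = Max (card ` \<Omega>)"

definition ss_f :: "'a set set \<Rightarrow> nat \<Rightarrow> nat" where
  "ss_f \<Omega> i = card {F\<in>\<Omega>. card F = i}"

text \<open>H(q) = (1-q)^d F(q/(1-q)) = sum_i f_i q^i (1-q)^(d-i), as a complex polynomial.\<close>
definition H_poly :: "'a set set \<Rightarrow> complex poly" where
  "H_poly \<Omega> = (\<Sum>i\<le>ss_dim \<Omega>.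
      smult (of_nat (ss_f \<Omega> i)) ([:0, 1:] ^ i * [:1, -1:] ^ (ss_dim \<Omega> - i)))"

definition in_BC :: "'a set set \<Rightarrow> bool" where
  "in_BC \<Omega> \<longleftrightarrow> (\<forall>q. poly (H_poly \<Omega>) q = 0 \<longrightarrow> cmod q \<le> 1)"

definition mult_sys :: "nat \<Rightarrow> 'a set set \<Rightarrow> ('a \<times> nat) set set" where
  "mult_sys k \<Omega> = {S. S \<subseteq> UNIV \<times> {1..k} \<and> inj_on fst S \<and> fst ` S \<in> \<Omega>}"

end

theory Submission imports Defs "HOL-Library.FuncSet" begin

lemma geom_bound:
  fixes M r :: real
  assumes "M \<ge> 0" "r \<ge> M + 1"
  shows "M * (\<Sum>i<d. r^i) \<le> r^d - 1"
proof (induction d)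
  case 0 then show ?case by simp
next
  case (Suc d)
  have "M * (\<Sum>i<Suc d. r^i) = M * (\<Sum>i<d. r^i) + M * r^d" by (simp add: algebra_simps)
  also have "\<dots> \<le> r^d - 1 + M * r^d" using Suc by simp
  also have "\<dots> \<le> r^(Suc d) - 1"
  proof -
    have "r^d \<ge> 0" using assms by simp
    then have "(M+1) * r^d \<le> r * r^d" using assms by (intro mult_right_mono) auto
    then show ?thesis by (simp add: algebra_simps)
  qed
  finally show ?case .
qed

lemma key:
  fixes f :: "nat \<Rightarrow> nat" and q :: complex and k :: nat
  assumes fd: "f d \<ge> 1" and kb: "real k \<ge> 2 * real (\<Sum>i\<le>d. f i) + 2" and q1: "cmod q > 1"
  shows "(\<Sum>i\<le>d. of_nat (f i * k^i) * (q^i * (1-q)^(d-i))) \<noteq> 0"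
proof -
  define M where "M = real (\<Sum>i\<le>d. f i)"
  have qn1: "1 - q \<noteq> 0" using q1 by auto
  define x where "x = of_nat k * q / (1 - q)"
  have eq: "(\<Sum>i\<le>d. of_nat (f i * k^i) * (q^i * (1-q)^(d-i))) = (1-q)^d * (\<Sum>i\<le>d. of_nat (f i) * x^i)"
    unfolding sum_distrib_left
  proof (rule sum.cong[OF refl])
    fix i assume "i \<in> {..d}"
    then have "(1-q)^d = (1-q)^(d-i) * (1-q)^i" by (simp add: power_add[symmetric])
    then show "of_nat (f i * k^i) * (q^i * (1-q)^(d-i)) = (1-q)^d * (of_nat (f i) * x^i)"
      using qn1 by (simp add: x_def power_divide power_mult_distrib)
  qed
  have "cmod (1 - q) \<le> 1 + cmod q" by (metis norm_one norm_triangle_ineq4)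
  also have "\<dots> < 2 * cmod q" using q1 by simp
  finally have nq: "cmod (1-q) < 2 * cmod q" .
  have pos: "cmod (1-q) > 0" using qn1 by simp
  have "(0::real) \<le> (\<Sum>i\<le>d. real (f i))" by (simp add: sum_nonneg)
  then have kpos: "real k > 0" using kb by simp
  have r: "cmod x > M + 1"
  proof -
    have "cmod x = real k * cmod q / cmod (1-q)" by (simp add: x_def norm_divide norm_mult)
    moreover have h: "real k * cmod q / cmod (1-q) > real k / 2"
      using nq pos kpos by (simp add: field_simps)
    ultimately show ?thesis using kb unfolding M_def by linarith
  qed
  define r where "r = cmod x"
  have M0: "M \<ge> 0" by (simp add: M_def sum_nonneg)
  have fM: "real (f i) \<le> M" if "i \<le> d" for i
  proof -
    have "f i \<le> (\<Sum>i\<le>d. f i)" using that by (intro member_le_sum) auto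
    then show ?thesis unfolding M_def by (simp only: of_nat_le_iff)
  qed
  have "cmod (\<Sum>i<d. of_nat (f i) * x^i) \<le> (\<Sum>i<d. real (f i) * r^i)"
    by (rule order_trans[OF norm_sum]) (simp add: norm_mult norm_power r_def)
  also have "\<dots> \<le> (\<Sum>i<d. M * r^i)"
    by (intro sum_mono mult_right_mono) (auto simp: r_def fM)
  also have "\<dots> = M * (\<Sum>i<d. r^i)" by (simp add: sum_distrib_left)
  also have "\<dots> \<le> r^d - 1" using geom_bound[OF M0, of r d] r r_def by simp
  finally have low: "cmod (\<Sum>i<d. of_nat (f i) * x^i) < r^d" by simp
  have "r^d \<le> real (f d) * r^d"
  proof -
    have "1 * r^d \<le> real (f d) * r^d" using fd r_def by (intro mult_right_mono) auto
    then show ?thesis by simp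
  qed
  also have "\<dots> = cmod (of_nat (f d) * x^d)" by (simp add: norm_mult norm_power r_def)
  finally have high: "cmod (\<Sum>i<d. of_nat (f i) * x^i) < cmod (of_nat (f d) * x^d)" using low by simp
  have split: "(\<Sum>i\<le>d. of_nat (f i) * x^i) = of_nat (f d) * x^d + (\<Sum>i<d. of_nat (f i) * x^i)"
    by (simp add: lessThan_Suc_atMost[symmetric])
  have "(\<Sum>i\<le>d. of_nat (f i) * x^i) \<noteq> (0::complex)"
  proof
    assume "(\<Sum>i\<le>d. of_nat (f i) * x^i) = (0::complex)"
    then have "of_nat (f d) * x^d = - (\<Sum>i<d. of_nat (f i) * x^i)" using split by (simp add: eq_neg_iff_add_eq_0)
    then have "cmod (of_nat (f d) * x^d) = cmod (\<Sum>i<d. of_nat (f i) * x^i)" by simp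
    then show False using high by simp
  qed
  then show ?thesis using eq qn1 by simp
qed

lemma fibre_eq:
  "{S. S \<subseteq> UNIV \<times> {1..k} \<and> inj_on fst S \<and> fst ` S = F}
   = (\<lambda>g. (\<lambda>x. (x, g x)) ` F) ` (F \<rightarrow>\<^sub>E {1..k})" (is "?A = ?B")
proof
  show "?B \<subseteq> ?A" by (auto simp: inj_on_def PiE_def Pi_def image_image)
next
  show "?A \<subseteq> ?B"
  proof
    fix S assume S: "S \<in> ?A"
    define g where "g = (\<lambda>x\<in>F. SOME j. (x, j) \<in> S)"
    have g: "(x, g x) \<in> S" if "x \<in> F" for x
    proof -
      from that S obtain p where "p \<in> S" "fst p = x" by auto
      then have "\<exists>j. (x,j) \<in> S" by (cases p) auto
      then show ?thesis using that unfolding g_def by (auto intro: someI_ex)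
    qed
    have "S = (\<lambda>x. (x, g x)) ` F"
    proof
      show "(\<lambda>x. (x, g x)) ` F \<subseteq> S" using g by auto
      show "S \<subseteq> (\<lambda>x. (x, g x)) ` F"
      proof
        fix p assume p: "p \<in> S"
        then have a: "fst p \<in> F" using S by auto
        have "(fst p, g (fst p)) = p"
          using S g[OF a] p by (auto simp: inj_on_def)
        then show "p \<in> (\<lambda>x. (x, g x)) ` F" using a by force
      qed
    qed
    moreover have "g \<in> F \<rightarrow>\<^sub>E {1..k}" using g S unfolding g_def by force
    ultimately show "S \<in> ?B" by blast
  qed
qed

lemma fibre_card:
  assumes "finite F"
  shows "card {S. S \<subseteq> UNIV \<times> {1..k} \<and> inj_on fst S \<and> fst ` S = F} = k ^ card F"
    and "finite {S. S \<subseteq> UNIV \<times> {1..k} \<and> inj_on fst S \<and> fst ` S = F}"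
proof -
  have inj: "inj_on (\<lambda>g. (\<lambda>x. (x, g x)) ` F) (F \<rightarrow>\<^sub>E {1..k})"
  proof (rule inj_onI)
    fix g h assume g: "g \<in> F \<rightarrow>\<^sub>E {1..k}" and h: "h \<in> F \<rightarrow>\<^sub>E {1..k}"
      and e: "(\<lambda>x. (x, g x)) ` F = (\<lambda>x. (x, h x)) ` F"
    show "g = h"
    proof (rule PiE_ext[OF g h])
      fix x assume "x \<in> F"
      then have "(x, g x) \<in> (\<lambda>x. (x, h x)) ` F" using e by blast
      then show "g x = h x" by auto
    qed
  qed
  show "card {S. S \<subseteq> UNIV \<times> {1..k} \<and> inj_on fst S \<and> fst ` S = F} = k ^ card F"
    unfolding fibre_eq using card_image[OF inj] by (simp add: card_PiE assms)
  show "finite {S. S \<subseteq> UNIV \<times> {1..k} \<and> inj_on fst S \<and> fst ` S = F}"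
    unfolding fibre_eq using assms by (simp add: finite_PiE)
qed

lemma card_mult:
  assumes "S \<in> mult_sys k \<Omega>" shows "card S = card (fst ` S)"
  using assms by (simp add: mult_sys_def card_image)

lemma card_image_mult:
  assumes "0 < k"
  shows "card ` mult_sys k \<Omega> = card ` \<Omega>"
proof
  show "card ` mult_sys k \<Omega> \<subseteq> card ` \<Omega>"
  proof
    fix n assume "n \<in> card ` mult_sys k \<Omega>"
    then obtain S where S: "S \<in> mult_sys k \<Omega>" "n = card S" by blast
    then have "fst ` S \<in> \<Omega>" by (simp add: mult_sys_def)
    moreover have "n = card (fst ` S)" using S card_mult by simp
    ultimately show "n \<in> card ` \<Omega>" by blast
  qed
  show "card ` \<Omega> \<subseteq> card ` mult_sys k \<Omega>"
  proof
    fix n assume "n \<in> card ` \<Omega>"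
    then obtain F where F: "F \<in> \<Omega>" "n = card F" by auto
    define S where "S = (\<lambda>x. (x, 1::nat)) ` F"
    have "S \<subseteq> UNIV \<times> {1..k}" using assms by (auto simp: S_def)
    moreover have "inj_on fst S" by (auto simp: S_def inj_on_def)
    moreover have "fst ` S = F" by (simp add: S_def image_image)
    ultimately have "S \<in> mult_sys k \<Omega>" using F by (simp add: mult_sys_def)
    moreover have "card S = n" using F by (simp add: S_def card_image inj_on_def)
    ultimately show "n \<in> card ` mult_sys k \<Omega>" by blast
  qed
qed

lemma f_mult:
  assumes ss: "set_system E \<Omega>"
  shows "ss_f (mult_sys k \<Omega>) i = ss_f \<Omega> i * k ^ i"
proof -
  let ?T = "\<lambda>F. {S. S \<subseteq> UNIV \<times> {1..k} \<and> inj_on fst S \<and> fst ` S = F}"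
  let ?I = "{F\<in>\<Omega>. card F = i}"
  have finE: "finite E" and sub: "\<And>F. F \<in> \<Omega> \<Longrightarrow> F \<subseteq> E" using ss by (auto simp: set_system_def)
  have finO: "finite \<Omega>" using finE sub by (meson Pow_iff finite_Pow_iff rev_finite_subset subsetI)
  have finF: "\<And>F. F \<in> \<Omega> \<Longrightarrow> finite F" using finE sub finite_subset by blast
  have eq: "{S\<in>mult_sys k \<Omega>. card S = i} = (\<Union>F\<in>?I. ?T F)"
    using card_mult by (auto simp: mult_sys_def)
  have "card (\<Union>F\<in>?I. ?T F) = (\<Sum>F\<in>?I. card (?T F))"
  proof (rule card_UN_disjoint)
    show "finite ?I" using finO by simp
    show "\<forall>F\<in>?I. finite (?T F)" using finF fibre_card(2) by blast
    show "\<forall>F\<in>?I. \<forall>G\<in>?I. F \<noteq> G \<longrightarrow> ?T F \<inter> ?T G = {}" by auto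
  qed
  also have "\<dots> = (\<Sum>F\<in>?I. k ^ i)"
    by (rule sum.cong[OF refl]) (use finF fibre_card in auto)
  also have "\<dots> = card ?I * k ^ i" by simp
  finally show ?thesis unfolding ss_f_def eq .
qed

lemma poly_H: "poly (H_poly \<Omega>) q = (\<Sum>i\<le>ss_dim \<Omega>. of_nat (ss_f \<Omega> i) * (q^i * (1-q)^(ss_dim \<Omega> - i)))"
  by (simp add: H_poly_def poly_sum)

theorem proposition6p2:
  fixes E :: "'a set" and \<Omega> :: "'a set set"
  assumes "set_system E \<Omega>"
  shows "\<exists>K::nat. \<forall>k::nat. 0 < k \<and> K \<le> k \<longrightarrow> in_BC (mult_sys k \<Omega>)"
proof -
  let ?d = "ss_dim \<Omega>"
  have finE: "finite E" and sub: "\<And>F. F \<in> \<Omega> \<Longrightarrow> F \<subseteq> E" and ne: "\<Omega> \<noteq> {}"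
    using assms by (auto simp: set_system_def)
  have finO: "finite \<Omega>" using finE sub by (meson Pow_iff finite_Pow_iff rev_finite_subset subsetI)
  have "?d \<in> card ` \<Omega>" unfolding ss_dim_def using finO ne by (intro Max_in) auto
  then obtain F0 where F0: "F0 \<in> \<Omega>" "card F0 = ?d" by auto
  have fd: "ss_f \<Omega> ?d \<ge> 1"
  proof -
    have "F0 \<in> {F\<in>\<Omega>. card F = ?d}" using F0 by auto
    moreover have "finite {F\<in>\<Omega>. card F = ?d}" using finO by auto
    ultimately show ?thesis unfolding ss_f_def by (metis One_nat_def Suc_leI card_gt_0_iff empty_iff)
  qed
  define K where "K = 2 * (\<Sum>i\<le>?d. ss_f \<Omega> i) + 2"
  show ?thesis
  proof (intro exI[of _ K] allI impI)
    fix k :: nat assume k: "0 < k \<and> K \<le> k"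
    have dim: "ss_dim (mult_sys k \<Omega>) = ?d"
      unfolding ss_dim_def using card_image_mult k by metis
    show "in_BC (mult_sys k \<Omega>)"
      unfolding in_BC_def
    proof (intro allI impI)
      fix q assume "poly (H_poly (mult_sys k \<Omega>)) q = 0"
      then have z: "(\<Sum>i\<le>?d. of_nat (ss_f \<Omega> i * k^i) * (q^i * (1-q)^(?d-i))) = 0"
        unfolding poly_H dim f_mult[OF assms] .
      have kb: "real k \<ge> 2 * real (\<Sum>i\<le>?d. ss_f \<Omega> i) + 2"
        using k unfolding K_def by linarith
      show "cmod q \<le> 1"
        using key[OF fd kb] z by (meson not_le)
    qed
  qed
qed

end
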